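(* Let $p$ be an odd prime, $n\ge 1$, and $H^*(BA_n)=\mathbb{Z}/p[t_1,\dots,t_n]\otimes\Lambda(dt_1,\dots,dt_n)$ the mod $p$ cohomology of the classifying space of the elementary abelian $p$-group $A_n$ of rank $n$. Let $u_n=dt_1\cdots dt_n$ and $e_n=Q_0Q_1\cdots Q_{n-1}u_n$. For subsets $I,J$ of $\Delta_n=\{0,1,\dots,n-1\}$: if $I\cup J\neq\Delta_n$, then $Q_Iu_n\cdot Q_Ju_n=0$. If $I\cup J=\Delta_n$, then \[Q_Iu_n\cdot Q_Ju_n=(-1)^{nr+r^2}\,\mathrm{sgn}(K,I\setminus K)\,\mathrm{sgn}(I\setminus K,J)\,e_n\,Q_Ku_n,\] where $K=I\cap J$ and $r$ is the number of elements of $I\setminus K$.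
   Context: Here $dt_i$ form a basis of $H^1(BA_n)$ and $t_i=\beta\, dt_i$ with $\beta$ the Bockstein. $Q_i$ are the Milnor operations: $Q_0=\beta$ and $Q_{i+1}=\wp^{p^i}Q_i-Q_i\wp^{p^i}$, where $\wp^j$ is the $j$-th Steenrod reduced power. For $I=\{i_1,\dots,i_r\}\subseteq\Delta_n$ with $i_1<\dots<i_r$, $Q_Iu_n=Q_{i_1}\cdots Q_{i_r}u_n$, and $Q_\emptyset u_n=u_n$. For disjoint subsets $I=\{i_1<\dots<i_r\}$ and $J=\{j_1<\dots<j_s\}$ of $\Delta_n$, $\mathrm{sgn}(I,J)$ denotes the sign of the permutation sending $(1,\dots,r,r+1,\dots,r+s)$ to $(i_1,\dots,i_r,j_1,\dots,j_s)$ (i.e. the sign of the permutation sorting the sequence $i_1,\dots,i_r,j_1,\dots,j_s$ into increasing order); if $I$ or $J$ is empty, $\mathrm{sgn}(I,J)=1$. *)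

theory Defs
  imports "HOL-Library.Poly_Mapping" "Berlekamp_Zassenhaus.Finite_Field"
begin

text \<open>Model of H^*(BA_n; Z/p) = Z/p[t_0,...,t_(n-1)] tensor Lambda(dt_0,...,dt_(n-1)).
  A monomial t^a dt_S (a an exponent vector, S a set of indices, the exterior factors
  written in increasing order of index) is a pair (a, S); a cohomology class is a
  finitely supported coefficient function on monomials.\<close>

type_synonym mono = "(nat \<Rightarrow>\<^sub>0 nat) \<times> nat set"
type_synonym 'a coh = "mono \<Rightarrow>\<^sub>0 'a"

definition inv_count :: "nat set \<Rightarrow> nat set \<Rightarrow> nat" where
  "inv_count S T = card {(s, t). s \<in> S \<and> t \<in> T \<and> t < s}"

text \<open>sgn(S,T): sign of the permutation sorting the sequence s_1..s_r t_1..t_s.\<close>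
definition sgn :: "nat set \<Rightarrow> nat set \<Rightarrow> int" where
  "sgn S T = (-1) ^ inv_count S T"

definition smul :: "'a::ring_1 \<Rightarrow> 'a coh \<Rightarrow> 'a coh" where
  "smul c x = Poly_Mapping.map (\<lambda>d. c * d) x"

text \<open>Product of monomials in the graded commutative algebra (t's even, dt's odd).\<close>
definition mono_mult :: "mono \<Rightarrow> mono \<Rightarrow> 'a::ring_1 coh" where
  "mono_mult m m' = (if snd m \<inter> snd m' = {}
      then Poly_Mapping.single (fst m + fst m', snd m \<union> snd m') (of_int (sgn (snd m) (snd m')))
      else 0)"

definition cmult :: "'a::ring_1 coh \<Rightarrow> 'a coh \<Rightarrow> 'a coh" where
  "cmult x y = (\<Sum>m\<in>Poly_Mapping.keys x. \<Sum>m'\<in>Poly_Mapping.keys y. smul (Poly_Mapping.lookup x m * Poly_Mapping.lookup y m') (mono_mult m m'))"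

definition lin_ext :: "(mono \<Rightarrow> 'a::ring_1 coh) \<Rightarrow> 'a coh \<Rightarrow> 'a coh" where
  "lin_ext L x = (\<Sum>m\<in>Poly_Mapping.keys x. smul (Poly_Mapping.lookup x m) (L m))"

text \<open>Bockstein: the derivation (of degree 1, Koszul signs) with beta(dt_j) = t_j, beta(t_j) = 0.\<close>
definition bock_mono :: "mono \<Rightarrow> 'a::ring_1 coh" where
  "bock_mono m = (\<Sum>j\<in>snd m. Poly_Mapping.single
       (fst m + Poly_Mapping.single j 1, snd m - {j}) (of_int ((-1) ^ card {s\<in>snd m. s < j})))"

text \<open>Reduced power P^k: degree-2k part of the total power operation, i.e. the ring
  endomorphism with t_j -> t_j + t_j^p, dt_j -> dt_j (Cartan formula together with
  P^0 = id, P^1 t = t^p, P^k t = 0 for k > 1, P^k dt = 0 for k > 0).\<close>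
definition pow_mono :: "nat \<Rightarrow> nat \<Rightarrow> mono \<Rightarrow> 'a::ring_1 coh" where
  "pow_mono p k m = (\<Sum>b\<in>{b :: nat \<Rightarrow>\<^sub>0 nat. (\<forall>j. Poly_Mapping.lookup b j \<le> Poly_Mapping.lookup (fst m) j) \<and>
        (\<Sum>j\<in>Poly_Mapping.keys b. Poly_Mapping.lookup b j) = k}.
      Poly_Mapping.single (fst m + Poly_Mapping.map (\<lambda>e. (p - 1) * e) b, snd m)
        (of_nat (\<Prod>j\<in>Poly_Mapping.keys (fst m). Poly_Mapping.lookup (fst m) j choose Poly_Mapping.lookup b j)))"

definition bockstein :: "'a::ring_1 coh \<Rightarrow> 'a coh" where
  "bockstein = lin_ext bock_mono"

definition redpow :: "nat \<Rightarrow> nat \<Rightarrow> 'a::ring_1 coh \<Rightarrow> 'a coh" where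
  "redpow p k = lin_ext (pow_mono p k)"

primrec milnorQ :: "nat \<Rightarrow> nat \<Rightarrow> 'a::ring_1 coh \<Rightarrow> 'a coh" where
  "milnorQ p 0 = bockstein"
| "milnorQ p (Suc i) = (\<lambda>x. redpow p (p ^ i) (milnorQ p i x) - milnorQ p i (redpow p (p ^ i) x))"

definition u :: "nat \<Rightarrow> 'a::ring_1 coh" where
  "u n = Poly_Mapping.single (0, {..<n}) 1"

definition QI :: "nat \<Rightarrow> nat \<Rightarrow> nat set \<Rightarrow> 'a::ring_1 coh" where
  "QI p n I = foldr (milnorQ p) (sorted_list_of_set I) (u n)"

definition e :: "nat \<Rightarrow> nat \<Rightarrow> 'a::ring_1 coh" where
  "e p n = QI p n {..<n}"

end

theory Submission
  imports Defs
begin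

abbreviation "ks \<equiv> Poly_Mapping.keys"
abbreviation "lk \<equiv> Poly_Mapping.lookup"
abbreviation "sg \<equiv> Poly_Mapping.single"

lemma lookup_smul [simp]: "lk (smul c x) m = c * lk x m"
  by (simp add: smul_def Poly_Mapping.map.rep_eq when_def)

lemma smul_add: "smul c (x + y) = smul c x + smul (c::'a::ring_1) y"
  by (rule poly_mapping_eqI) (simp add: lookup_add algebra_simps)
lemma smul_add_left: "smul (c + d) x = smul c x + smul (d::'a::ring_1) x"
  by (rule poly_mapping_eqI) (simp add: lookup_add algebra_simps)
lemma smul_zero [simp]: "smul c 0 = (0::'a::ring_1 coh)"
  by (rule poly_mapping_eqI) simp
lemma smul_zero_left [simp]: "smul 0 x = (0::'a::ring_1 coh)"
  by (rule poly_mapping_eqI) simp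
lemma smul_one [simp]: "smul 1 x = (x::'a::ring_1 coh)"
  by (rule poly_mapping_eqI) simp
lemma smul_smul [simp]: "smul c (smul d x) = smul (c * d) (x::'a::ring_1 coh)"
  by (rule poly_mapping_eqI) (simp add: mult.assoc)
lemma smul_uminus: "smul c (- x) = - smul c (x::'a::ring_1 coh)"
  by (rule poly_mapping_eqI) simp
lemma smul_uminus_left: "smul (- c) x = - smul c (x::'a::ring_1 coh)"
  by (rule poly_mapping_eqI) simp
lemma smul_diff: "smul c (x - y) = smul c x - smul (c::'a::ring_1) y"
  by (rule poly_mapping_eqI) (simp add: lookup_minus algebra_simps)
lemma smul_sum: "smul c (sum f A) = (\<Sum>a\<in>A. smul (c::'a::ring_1) (f a))"
  by (induction A rule: infinite_finite_induct) (auto simp: smul_add)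
lemma smul_single [simp]: "smul c (sg m d) = sg m (c * (d::'a::ring_1))"
  by (rule poly_mapping_eqI) (simp add: lookup_single when_def)
lemma smul_sum_left: "smul (sum f A) x = (\<Sum>a\<in>A. smul (f a) (x::'a::ring_1 coh))"
  by (induction A rule: infinite_finite_induct) (auto simp: smul_add_left)

lemma lin_ext_superset:
  assumes "finite F" "ks x \<subseteq> F"
  shows "lin_ext L x = (\<Sum>m\<in>F. smul (lk x m) (L m))"
  unfolding lin_ext_def
  by (rule sum.mono_neutral_left) (use assms in \<open>auto simp: in_keys_iff\<close>)

lemma lin_ext_add: "lin_ext L (x + y) = lin_ext L x + lin_ext L (y :: 'a::ring_1 coh)"
proof -
  let ?F = "ks x \<union> ks y"
  have "ks (x+y) \<subseteq> ?F" by (rule keys_add)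
  then show ?thesis
    by (simp add: lin_ext_superset[of ?F] lookup_add smul_add_left sum.distrib)
qed

lemma lin_ext_zero [simp]: "lin_ext L 0 = (0 :: 'a::ring_1 coh)"
  by (simp add: lin_ext_def)

lemma lin_ext_single [simp]: "lin_ext L (sg m c) = smul c (L m :: 'a::ring_1 coh)"
  by (simp add: lin_ext_superset[of "{m}"])

lemma lin_ext_smul: "lin_ext L (smul c x) = smul c (lin_ext L (x :: 'a::ring_1 coh))"
proof -
  have "ks (smul c x) \<subseteq> ks x" by (auto simp: in_keys_iff)
  then show ?thesis by (simp add: lin_ext_superset[of "ks x"] smul_sum)
qed

lemma lin_ext_uminus: "lin_ext L (- x) = - lin_ext L (x :: 'a::ring_1 coh)"
  by (metis add.inverse_unique add_eq_0_iff lin_ext_add lin_ext_zero)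

lemma lin_ext_diff: "lin_ext L (x - y) = lin_ext L x - lin_ext L (y :: 'a::ring_1 coh)"
  by (simp only: diff_conv_add_uminus lin_ext_add lin_ext_uminus)

lemma lin_ext_sum: "lin_ext L (sum f A) = (\<Sum>a\<in>A. lin_ext L (f a :: 'a::ring_1 coh))"
  by (induction A rule: infinite_finite_induct) (auto simp: lin_ext_add)

lemma lin_ext_cong: "(\<And>m. m \<in> ks x \<Longrightarrow> L m = L' m) \<Longrightarrow> lin_ext L x = lin_ext L' x"
  by (simp add: lin_ext_def)

lemma lin_ext_comp: "lin_ext L1 (lin_ext L2 x) = lin_ext (\<lambda>m. lin_ext L1 (L2 m)) (x :: 'a::ring_1 coh)"
proof -
  have "lin_ext L1 (lin_ext L2 x) = (\<Sum>m\<in>ks x. lin_ext L1 (smul (lk x m) (L2 m)))"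
    by (simp only: lin_ext_def[of L2 x] lin_ext_sum)
  also have "\<dots> = (\<Sum>m\<in>ks x. smul (lk x m) (lin_ext L1 (L2 m)))"
    by (simp only: lin_ext_smul)
  finally show ?thesis by (simp only: lin_ext_def[of _ x])
qed

lemma lin_ext_fun_add: "lin_ext (\<lambda>m. L m + L' m) x = lin_ext L x + lin_ext L' (x :: 'a::ring_1 coh)"
  by (simp add: lin_ext_def smul_add sum.distrib)
lemma lin_ext_fun_diff: "lin_ext (\<lambda>m. L m - L' m) x = lin_ext L x - lin_ext L' (x :: 'a::ring_1 coh)"
  by (simp add: lin_ext_def smul_diff sum_subtractf)
lemma lin_ext_fun_smul: "lin_ext (\<lambda>m. smul c (L m)) x = smul c (lin_ext L (x :: 'a::comm_ring_1 coh))"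
  by (simp add: lin_ext_def smul_sum mult.commute)
lemma lin_ext_fun_zero: "lin_ext (\<lambda>m. 0) x = (0 :: 'a::ring_1 coh)"
  by (simp add: lin_ext_def)
lemma lin_ext_fun_uminus: "lin_ext (\<lambda>m. - L m) x = - lin_ext L (x :: 'a::ring_1 coh)"
  by (simp add: lin_ext_def smul_uminus sum_negf)
lemma lin_ext_fun_sum: "finite A \<Longrightarrow> lin_ext (\<lambda>m. \<Sum>a\<in>A. L a m) x = (\<Sum>a\<in>A. lin_ext (L a) (x :: 'a::ring_1 coh))"
  by (induction A rule: finite_induct) (auto simp: lin_ext_fun_add lin_ext_fun_zero)

lemma lin_ext_id: "lin_ext (\<lambda>m. sg m 1) x = (x :: 'a::ring_1 coh)"
  by (rule poly_mapping_eqI) (simp add: lin_ext_def lookup_sum lookup_single when_def in_keys_iff)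

lemma keys_lin_ext: "ks (lin_ext L x) \<subseteq> (\<Union>m\<in>ks x. ks (L m :: 'a::ring_1 coh))"
proof -
  have "ks (lin_ext L x) \<subseteq> (\<Union>m\<in>ks x. ks (smul (lk x m) (L m)))"
    unfolding lin_ext_def by (rule keys_sum)
  also have "\<dots> \<subseteq> (\<Union>m\<in>ks x. ks (L m))" 
  proof (rule UN_mono)
    fix m show "ks (smul (lk x m) (L m)) \<subseteq> ks (L m)"
      by (rule subsetI) (metis in_keys_iff lookup_smul mult_zero_right)
  qed simp
  finally show ?thesis .
qed

lemma cmult_lin: "cmult x y = lin_ext (\<lambda>m. lin_ext (\<lambda>m'. mono_mult m m') y) (x :: 'a::ring_1 coh)"
  by (simp add: cmult_def lin_ext_def smul_sum)

lemma lin_ext_swap: "lin_ext (\<lambda>m. lin_ext (\<lambda>m'. f m m') y) x = lin_ext (\<lambda>m'. lin_ext (\<lambda>m. f m m') x) (y :: 'a::comm_ring_1 coh)"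
  unfolding lin_ext_def smul_sum smul_smul
  by (subst sum.swap) (simp add: mult.commute)

lemma cmult_lin2: "cmult x y = lin_ext (\<lambda>m'. cmult x (sg m' 1)) (y :: 'a::comm_ring_1 coh)"
  by (simp add: cmult_lin lin_ext_swap[of _ y])


lemma coeff_pow11: "coeff ([:1,1:]^n) b = (of_nat (n choose b) :: 'a::comm_semiring_1)"
proof (cases "b \<le> n")
  case True
  then show ?thesis using coeff_linear_poly_power[of b n 1 1] by simp
next
  case False
  have "degree ([:1::'a,1:]^n) \<le> n"
    using degree_power_le[of "[:1::'a,1:]" n] by simp
  then have "coeff ([:1::'a,1:]^n) b = 0" using False by (intro coeff_eq_0) simp
  then show ?thesis using False by (simp add: binomial_eq_0)
qed

lemma binom_mod:
  assumes "prime CHAR('a::comm_ring_1)" "k = CHAR('a)^i"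
  shows "(of_nat ((c+k) choose b) :: 'a) = of_nat (c choose b) + (if k \<le> b then of_nat (c choose (b-k)) else 0)"
proof -
  have ch: "prime CHAR('a poly)" using assms(1) by simp
  have e1: "([:1,1:] :: 'a poly) = 1 + monom 1 1"
    by (simp add: monom_altdef one_pCons)
  have "([:1,1:] :: 'a poly)^k = 1^k + (monom 1 1)^k"
    unfolding e1 by (rule freshmans_dream'[OF ch]) (simp add: assms(2))
  also have "\<dots> = 1 + monom 1 k" by (simp add: monom_power)
  finally have pk: "([:1,1:] :: 'a poly)^k = 1 + monom 1 k" .
  have "([:1,1:] :: 'a poly)^(c+k) = [:1,1:]^c + monom 1 k * [:1,1:]^c"
    by (simp add: power_add pk algebra_simps)
  then have "coeff (([:1,1:] :: 'a poly)^(c+k)) b = coeff ([:1,1:]^c) b + coeff (monom 1 k * [:1,1:]^c) b"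
    by simp
  then show ?thesis by (simp add: coeff_pow11 coeff_monom_mult not_less)
qed

lemma finite_bounded_pm: "finite {b :: nat \<Rightarrow>\<^sub>0 nat. \<forall>j. lk b j \<le> lk a j}"
proof -
  let ?A = "{b :: nat \<Rightarrow>\<^sub>0 nat. \<forall>j. lk b j \<le> lk a j}"
  let ?f = "\<lambda>b. restrict (lk b) (ks a)"
  have inj: "inj_on ?f ?A"
  proof (rule inj_onI)
    fix x y assume x: "x \<in> ?A" and y: "y \<in> ?A" and eq: "?f x = ?f y"
    show "x = y"
    proof (rule poly_mapping_eqI)
      fix j show "lk x j = lk y j"
      proof (cases "j \<in> ks a")
        case True then show ?thesis using fun_cong[OF eq, of j] by simp
      next
        case False then have "lk a j = 0" by (simp add: in_keys_iff)
        then show ?thesis using x y by (metis le_zero_eq mem_Collect_eq)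
      qed
    qed
  qed
  have "?f ` ?A \<subseteq> (\<Pi>\<^sub>E j \<in> ks a. {..lk a j})" by auto
  moreover have "finite (\<Pi>\<^sub>E j \<in> ks a. {..lk a j})" by (intro finite_PiE) auto
  ultimately have "finite (?f ` ?A)" by (rule finite_subset)
  then show ?thesis using inj by (rule finite_imageD)
qed

definition Cb :: "(nat \<Rightarrow>\<^sub>0 nat) \<Rightarrow> (nat \<Rightarrow>\<^sub>0 nat) \<Rightarrow> nat" where
  "Cb a b = (\<Prod>j\<in>ks a. lk a j choose lk b j)"
definition Bs :: "(nat \<Rightarrow>\<^sub>0 nat) \<Rightarrow> nat \<Rightarrow> (nat \<Rightarrow>\<^sub>0 nat) set" where
  "Bs a k = {b. (\<forall>j. lk b j \<le> lk a j) \<and> (\<Sum>j\<in>ks b. lk b j) = k}"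
definition mp :: "nat \<Rightarrow> (nat \<Rightarrow>\<^sub>0 nat) \<Rightarrow> (nat \<Rightarrow>\<^sub>0 nat)" where
  "mp p b = Poly_Mapping.map (\<lambda>e. (p - 1) * e) b"

lemma pow_mono_alt: "pow_mono p k m = (\<Sum>b\<in>Bs (fst m) k. sg (fst m + mp p b, snd m) (of_nat (Cb (fst m) b)))"
  by (simp add: pow_mono_def Bs_def mp_def Cb_def)

lemma finite_Bs: "finite (Bs a k)"
  by (rule finite_subset[OF _ finite_bounded_pm[of a]]) (auto simp: Bs_def)

lemma prod_choose_superset:
  assumes "finite F" "ks a \<subseteq> F" "ks b \<subseteq> F"
  shows "(\<Prod>l\<in>F. lk a l choose lk b l) = (if \<forall>l. lk b l \<le> lk a l then Cb a b else 0)"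
proof (cases "\<forall>l. lk b l \<le> lk a l")
  case True
  have "Cb a b = (\<Prod>l\<in>F. lk a l choose lk b l)"
    unfolding Cb_def
  proof (rule prod.mono_neutral_left[OF assms(1,2)])
    show "\<forall>i\<in>F - ks a. lk a i choose lk b i = 1"
    proof
      fix i assume "i \<in> F - ks a"
      then have ai: "lk a i = 0" by (simp add: in_keys_iff)
      then have "lk b i = 0" using True by (metis le_zero_eq)
      then show "lk a i choose lk b i = 1" by (simp add: ai)
    qed
  qed
  then show ?thesis using True by simp
next
  case False
  then obtain l where l: "lk a l < lk b l" by (auto simp: not_le)
  then have "l \<in> F" using assms(3) by (auto simp: in_keys_iff)
  moreover have "lk a l choose lk b l = 0" using l by (simp add: binomial_eq_0)
  ultimately show ?thesis using False assms(1) by (auto intro: prod_zero)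
qed

lemma sum_eq_single:
  fixes b :: "nat \<Rightarrow>\<^sub>0 nat"
  assumes "(\<Sum>l\<in>ks b. lk b l) = k" "k \<le> lk b j"
  shows "b = sg j k"
proof (rule poly_mapping_eqI)
  fix l
  have le: "lk b l' \<le> k" for l'
  proof (cases "l' \<in> ks b")
    case True then show ?thesis using assms(1) member_le_sum[of l' "ks b" "lk b"] by simp
  next
    case False then show ?thesis by (simp add: in_keys_iff)
  qed
  have bj: "lk b j = k" using le[of j] assms(2) by simp
  show "lk b l = lk (sg j k) l"
  proof (cases "l = j")
    case True then show ?thesis using bj by (simp add: lookup_single)
  next
    case False
    show ?thesis
    proof (cases "k = 0")
      case True then show ?thesis using le[of l] False by (simp add: lookup_single)
    next
      case k: False
      have jin: "j \<in> ks b" using bj k by (simp add: in_keys_iff)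
      show ?thesis
      proof (rule ccontr)
        assume "lk b l \<noteq> lk (sg j k) l"
        then have lin: "l \<in> ks b" using False by (simp add: lookup_single in_keys_iff when_def)
        have "(\<Sum>l'\<in>{l,j}. lk b l') \<le> (\<Sum>l'\<in>ks b. lk b l')"
          by (rule sum_mono2) (use lin jin in auto)
        then have "lk b l + k \<le> k" using False bj assms(1) by simp
        then show False using lin by (simp add: in_keys_iff)
      qed
    qed
  qed
qed

lemma lk_add_single: "lk (a + sg j k) l = lk a l + (if l = j then k else 0)"
  by (simp add: lookup_add lookup_single when_def)

lemma keys_add_single:
  fixes a :: "nat \<Rightarrow>\<^sub>0 nat"
  assumes "k > 0" shows "ks (a + sg j k) = insert j (ks a)"
proof (rule Set.set_eqI)
  fix l show "l \<in> ks (a + sg j k) \<longleftrightarrow> l \<in> insert j (ks a)"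
    using assms by (simp add: in_keys_iff lk_add_single)
qed

lemma char_pos: "prime CHAR('a::comm_ring_1) \<Longrightarrow> CHAR('a) ^ i > 0"
  using prime_gt_0_nat by auto

lemma coef_shift:
  assumes ch: "prime CHAR('a::comm_ring_1)" and kdef: "k = CHAR('a)^i"
    and b: "b \<in> Bs (a + sg j k) k"
  shows "(of_nat (Cb (a + sg j k) b) :: 'a) =
     (if \<forall>l. lk b l \<le> lk a l then of_nat (Cb a b) else 0) + (if b = sg j k then 1 else 0)"
proof -
  let ?a' = "a + sg j k"
  have kpos: "k > 0" using char_pos[OF ch] kdef by simp
  define F where "F = ks ?a'"
  have F: "F = insert j (ks a)" unfolding F_def using keys_add_single[OF kpos] .
  have finF: "finite F" unfolding F_def by simp
  have bsum: "(\<Sum>l\<in>ks b. lk b l) = k" and ble: "\<And>l. lk b l \<le> lk ?a' l" using b by (auto simp: Bs_def)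
  have ksb: "ks b \<subseteq> F" unfolding F_def using ble by (auto simp: in_keys_iff) (metis less_le_trans)
  define R where "R = (\<Prod>l\<in>F-{j}. lk a l choose lk b l)"
  have "Cb ?a' b = (\<Prod>l\<in>F. lk ?a' l choose lk b l)" by (simp add: Cb_def F_def)
  also have "\<dots> = (lk ?a' j choose lk b j) * (\<Prod>l\<in>F-{j}. lk ?a' l choose lk b l)"
    by (rule prod.remove[OF finF]) (simp add: F)
  also have "(\<Prod>l\<in>F-{j}. lk ?a' l choose lk b l) = R"
    unfolding R_def by (rule prod.cong) (auto simp: lk_add_single)
  finally have c1: "Cb ?a' b = ((lk a j + k) choose lk b j) * R" by (simp add: lk_add_single)
  have P0: "(\<Prod>l\<in>F. lk a l choose lk b l) = (lk a j choose lk b j) * R"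
    unfolding R_def by (rule prod.remove[OF finF]) (simp add: F)
  have H: "(\<Prod>l\<in>F. lk a l choose lk b l) = (if \<forall>l. lk b l \<le> lk a l then Cb a b else 0)"
    by (rule prod_choose_superset[OF finF _ ksb]) (simp add: F subset_insertI)
  have "(of_nat (Cb ?a' b) :: 'a) = of_nat ((lk a j + k) choose lk b j) * of_nat R"
    by (simp add: c1)
  also have "\<dots> = (of_nat (lk a j choose lk b j) + (if k \<le> lk b j then of_nat (lk a j choose (lk b j - k)) else 0)) * of_nat R"
    by (simp add: binom_mod[OF ch kdef])
  also have "\<dots> = of_nat (if \<forall>l. lk b l \<le> lk a l then Cb a b else 0) + (if k \<le> lk b j then of_nat (lk a j choose (lk b j - k)) * of_nat R else 0)"
    by (simp add: distrib_right H[symmetric] P0)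
  also have "(if k \<le> lk b j then of_nat (lk a j choose (lk b j - k)) * of_nat R else (0::'a)) = (if b = sg j k then 1 else 0)"
  proof (cases "k \<le> lk b j")
    case True
    then have bj: "b = sg j k" using sum_eq_single[OF bsum] by simp
    have "R = 1" unfolding R_def bj by (rule prod.neutral) (auto simp: lookup_single when_def)
    then show ?thesis using True bj by simp
  next
    case False
    then have "b \<noteq> sg j k" by auto
    then show ?thesis using False by simp
  qed
  finally show ?thesis by simp
qed


definition sgj :: "nat set \<Rightarrow> nat \<Rightarrow> int" where
  "sgj S j = (-1) ^ card {s\<in>S. s < j}"

definition qm :: "nat \<Rightarrow> nat \<Rightarrow> mono \<Rightarrow> 'a::ring_1 coh" where
  "qm p i m = (\<Sum>j\<in>snd m. sg (fst m + sg j (p ^ i), snd m - {j}) (of_int (sgj (snd m) j)))"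

lemma sg_if: "sg x (if P then c else 0) = (if P then sg x c else 0)"
  by simp

lemma pow_shift:
  assumes ch: "prime CHAR('a::comm_ring_1)" and kdef: "k = CHAR('a)^i"
  shows "(pow_mono CHAR('a) k (a + sg j k, T) :: 'a coh) =
    (\<Sum>b\<in>Bs a k. sg (a + sg j k + mp CHAR('a) b, T) (of_nat (Cb a b))) + sg (a + sg j k + mp CHAR('a) (sg j k), T) 1"
proof -
  let ?p = "CHAR('a)" and ?a' = "a + sg j k"
  have kpos: "k > 0" using char_pos[OF ch] kdef by simp
  have sub: "Bs a k \<subseteq> Bs ?a' k"
    by (auto simp: Bs_def lk_add_single) (meson le_add1 order_trans)
  have jin: "sg j k \<in> Bs ?a' k"
    using kpos by (auto simp: Bs_def lk_add_single lookup_single when_def)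
  have "(pow_mono ?p k (?a', T) :: 'a coh) = (\<Sum>b\<in>Bs ?a' k. sg (?a' + mp ?p b, T) (of_nat (Cb ?a' b)))"
    by (simp add: pow_mono_alt)
  also have "\<dots> = (\<Sum>b\<in>Bs ?a' k. (if b \<in> Bs a k then sg (?a' + mp ?p b, T) (of_nat (Cb a b)) else 0)
        + (if b = sg j k then sg (?a' + mp ?p b, T) 1 else 0))"
  proof (rule sum.cong[OF refl])
    fix b assume b: "b \<in> Bs ?a' k"
    have iff: "(\<forall>l. lk b l \<le> lk a l) \<longleftrightarrow> b \<in> Bs a k" using b by (auto simp: Bs_def)
    show "sg (?a' + mp ?p b, T) (of_nat (Cb ?a' b)) = (if b \<in> Bs a k then sg (?a' + mp ?p b, T) (of_nat (Cb a b)) else 0)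
        + (if b = sg j k then sg (?a' + mp ?p b, T) (1::'a) else 0)"
      unfolding coef_shift[OF ch kdef b] single_add iff by simp
  qed
  also have "\<dots> = (\<Sum>b\<in>Bs ?a' k. (if b \<in> Bs a k then sg (?a' + mp ?p b, T) (of_nat (Cb a b)) else 0))
        + (\<Sum>b\<in>Bs ?a' k. (if b = sg j k then sg (?a' + mp ?p b, T) 1 else 0))"
    by (rule sum.distrib)
  also have "(\<Sum>b\<in>Bs ?a' k. (if b \<in> Bs a k then sg (?a' + mp ?p b, T) (of_nat (Cb a b)) else 0))
      = (\<Sum>b\<in>Bs a k. sg (?a' + mp ?p b, T) (of_nat (Cb a b) :: 'a))"
  proof -
    have e: "Bs ?a' k \<inter> Bs a k = Bs a k" using sub by blast
    show ?thesis by (subst sum.inter_restrict[symmetric]) (simp_all add: finite_Bs e)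
  qed
  also have "(\<Sum>b\<in>Bs ?a' k. (if b = sg j k then sg (?a' + mp ?p b, T) 1 else 0)) = sg (?a' + mp ?p (sg j k), T) (1::'a)"
    using jin by (simp add: sum.delta' finite_Bs)
  finally show ?thesis .
qed

lemma mp_single: "mp p (sg j k) = sg j ((p - 1) * k)"
  by (simp add: mp_def)

lemma qm_step:
  assumes ch: "prime CHAR('a::comm_ring_1)"
  shows "lin_ext (pow_mono CHAR('a) (CHAR('a)^i)) (qm CHAR('a) i m)
       - lin_ext (qm CHAR('a) i) (pow_mono CHAR('a) (CHAR('a)^i) m) = (qm CHAR('a) (Suc i) m :: 'a coh)"
proof -
  obtain a S where m: "m = (a, S)" by (cases m)
  let ?p = "CHAR('a)"
  define k where "k = ?p ^ i"
  have L1: "lin_ext (pow_mono ?p k) (qm ?p i m) =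
     (\<Sum>j\<in>S. smul (of_int (sgj S j)) (pow_mono ?p k (a + sg j k, S - {j})) :: 'a coh)"
    by (simp add: m qm_def k_def lin_ext_sum)
  have L2: "lin_ext (qm ?p i) (pow_mono ?p k m) =
     (\<Sum>j\<in>S. smul (of_int (sgj S j)) (\<Sum>b\<in>Bs a k. sg (a + sg j k + mp ?p b, S - {j}) (of_nat (Cb a b))) :: 'a coh)"
  proof -
    have "lin_ext (qm ?p i) (pow_mono ?p k m) =
      (\<Sum>b\<in>Bs a k. \<Sum>j\<in>S. sg (a + mp ?p b + sg j k, S - {j}) (of_nat (Cb a b) * of_int (sgj S j)) :: 'a coh)"
      by (simp add: m pow_mono_alt lin_ext_sum qm_def k_def smul_sum)
    also have "\<dots> = (\<Sum>j\<in>S. \<Sum>b\<in>Bs a k. sg (a + sg j k + mp ?p b, S - {j}) (of_int (sgj S j) * of_nat (Cb a b)))"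
      by (subst sum.swap) (simp add: ac_simps)
    finally show ?thesis by (simp add: smul_sum)
  qed
  have L3: "pow_mono ?p k (a + sg j k, S - {j}) - (\<Sum>b\<in>Bs a k. sg (a + sg j k + mp ?p b, S - {j}) (of_nat (Cb a b)))
      = (sg (a + sg j (?p ^ Suc i), S - {j}) 1 :: 'a coh)" for j
  proof -
    have pp: "?p > 0" using ch prime_gt_0_nat by blast
    have "sg j k + mp ?p (sg j k) = sg j (?p ^ Suc i)"
      unfolding mp_single single_add[symmetric] k_def using pp
      by (simp add: algebra_simps)
    then show ?thesis by (simp add: pow_shift[OF ch k_def] add.assoc)
  qed
  have "lin_ext (pow_mono ?p k) (qm ?p i m) - lin_ext (qm ?p i) (pow_mono ?p k m) =
     (\<Sum>j\<in>S. smul (of_int (sgj S j)) (pow_mono ?p k (a + sg j k, S - {j})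
         - (\<Sum>b\<in>Bs a k. sg (a + sg j k + mp ?p b, S - {j}) (of_nat (Cb a b)))) :: 'a coh)"
    unfolding L1 L2 by (simp add: smul_diff sum_subtractf)
  also have "\<dots> = qm ?p (Suc i) m"
    unfolding L3 by (simp add: m qm_def mult.commute)
  finally show ?thesis by (simp add: k_def)
qed

lemma milnorQ_eq:
  assumes ch: "prime CHAR('a::comm_ring_1)"
  shows "milnorQ CHAR('a) i = (lin_ext (qm CHAR('a) i) :: 'a coh \<Rightarrow> 'a coh)"
proof (induction i)
  case 0
  have "bock_mono = (qm CHAR('a) 0 :: mono \<Rightarrow> 'a coh)"
    by (rule ext) (simp add: bock_mono_def qm_def sgj_def)
  then show ?case by (simp add: bockstein_def)
next
  case (Suc i)
  show ?case
  proof (rule ext)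
    fix x :: "'a coh"
    show "milnorQ CHAR('a) (Suc i) x = lin_ext (qm CHAR('a) (Suc i)) x"
      by (simp only: milnorQ.simps Suc.IH redpow_def lin_ext_comp lin_ext_fun_diff[symmetric] qm_step[OF ch])
  qed
qed

lemma milnorQ_mod_ring:
  "milnorQ CARD('p::prime_card) i = (lin_ext (qm CARD('p) i) :: 'p mod_ring coh \<Rightarrow> 'p mod_ring coh)"
  using milnorQ_eq[where 'a="'p mod_ring"] prime_card[where 'a='p] by simp


lemma m1_eq: "even (a + b) \<Longrightarrow> (-1::int) ^ a = (-1) ^ b"
  by (simp add: minus_one_power_iff)

lemma inv_count_remove_left:
  fixes S T :: "nat set"
  assumes "finite S" "finite T" "j \<in> S"
  shows "inv_count S T = inv_count (S - {j}) T + card {t\<in>T. t < j}"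
proof -
  have eq: "{(s, t). s \<in> S \<and> t \<in> T \<and> t < s} =
      {(s, t). s \<in> S - {j} \<and> t \<in> T \<and> t < s} \<union> Pair j ` {t\<in>T. t < j}"
    using assms(3) by auto
  have fin: "finite {(s, t). s \<in> S - {j} \<and> t \<in> T \<and> t < s}"
    by (rule finite_subset[of _ "S \<times> T"]) (use assms in auto)
  have "card ({(s, t). s \<in> S - {j} \<and> t \<in> T \<and> t < s} \<union> Pair j ` {t\<in>T. t < j})
      = card {(s, t). s \<in> S - {j} \<and> t \<in> T \<and> t < s} + card (Pair j ` {t\<in>T. t < j})"
    by (rule card_Un_disjoint) (use fin assms in auto)
  moreover have "card (Pair j ` {t\<in>T. t < j}) = card {t\<in>T. t < j}"
    by (rule card_image) (simp add: inj_on_def)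
  ultimately show ?thesis unfolding inv_count_def eq by simp
qed

lemma inv_count_remove_right:
  fixes S T :: "nat set"
  assumes "finite S" "finite T" "j \<in> T"
  shows "inv_count S T = inv_count S (T - {j}) + card {s\<in>S. j < s}"
proof -
  have eq: "{(s, t). s \<in> S \<and> t \<in> T \<and> t < s} =
      {(s, t). s \<in> S \<and> t \<in> T - {j} \<and> t < s} \<union> (\<lambda>s. (s, j)) ` {s\<in>S. j < s}"
    using assms(3) by auto
  have fin: "finite {(s, t). s \<in> S \<and> t \<in> T - {j} \<and> t < s}"
    by (rule finite_subset[of _ "S \<times> T"]) (use assms in auto)
  have "card ({(s, t). s \<in> S \<and> t \<in> T - {j} \<and> t < s} \<union> (\<lambda>s. (s, j)) ` {s\<in>S. j < s})
      = card {(s, t). s \<in> S \<and> t \<in> T - {j} \<and> t < s} + card ((\<lambda>s. (s, j)) ` {s\<in>S. j < s})"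
    by (rule card_Un_disjoint) (use fin assms in auto)
  moreover have "card ((\<lambda>s. (s, j)) ` {s\<in>S. j < s}) = card {s\<in>S. j < s}"
    by (rule card_image) (simp add: inj_on_def)
  ultimately show ?thesis unfolding inv_count_def eq by simp
qed

lemma card_lt_gt:
  fixes S T :: "nat set"
  assumes "finite S" "j \<notin> S"
  shows "card {s\<in>S. s < j} + card {s\<in>S. j < s} = card S"
proof -
  have "S = {s\<in>S. s < j} \<union> {s\<in>S. j < s}" using assms(2) by (auto simp: neq_iff) (metis linorder_neqE_nat)
  then have "card S = card ({s\<in>S. s < j} \<union> {s\<in>S. j < s})" by simp
  also have "\<dots> = card {s\<in>S. s < j} + card {s\<in>S. j < s}"
    by (rule card_Un_disjoint) (use assms in auto)
  finally show ?thesis by simp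
qed

lemma card_lt_union:
  fixes S T :: "nat set"
  assumes "finite S" "finite T" "S \<inter> T = {}"
  shows "card {x\<in>S \<union> T. x < j} = card {s\<in>S. s < j} + card {t\<in>T. t < j}"
proof -
  have "{x\<in>S \<union> T. x < j} = {s\<in>S. s < j} \<union> {t\<in>T. t < j}" by auto
  moreover have "card ({s\<in>S. s < j} \<union> {t\<in>T. t < j}) = card {s\<in>S. s < j} + card {t\<in>T. t < j}"
    by (rule card_Un_disjoint) (use assms in auto)
  ultimately show ?thesis by simp
qed

lemma card_lt_remove_less:
  fixes S T :: "nat set"
  assumes "finite S" "l \<in> S" "l < j"
  shows "card {s\<in>S - {l}. s < j} + 1 = card {s\<in>S. s < j}"
proof -
  have "{s\<in>S. s < j} = insert l {s\<in>S - {l}. s < j}" using assms by auto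
  then show ?thesis using assms(1) by simp
qed

lemma card_lt_remove_ge:
  fixes S T :: "nat set"
  assumes "j \<le> l"
  shows "card {s\<in>S - {l}. s < j} = card {s\<in>S. s < j}"
proof -
  have "{s\<in>S - {l}. s < j} = {s\<in>S. s < j}" using assms by auto
  then show ?thesis by simp
qed

lemma inv_count_comm:
  fixes S T :: "nat set"
  assumes "finite S" "finite T" "S \<inter> T = {}"
  shows "inv_count S T + inv_count T S = card S * card T"
proof -
  have fin: "finite (S \<times> T)" using assms by simp
  have eq: "S \<times> T = {(s, t). s \<in> S \<and> t \<in> T \<and> t < s} \<union> {(s, t). s \<in> S \<and> t \<in> T \<and> s < t}"
    using assms(3) by (auto simp: neq_iff)
  have "card (S \<times> T) = card {(s, t). s \<in> S \<and> t \<in> T \<and> t < s} + card {(s, t). s \<in> S \<and> t \<in> T \<and> s < t}"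
  proof -
    have f1: "finite {(s, t). s \<in> S \<and> t \<in> T \<and> t < s}" by (rule finite_subset[OF _ fin]) auto
    have f2: "finite {(s, t). s \<in> S \<and> t \<in> T \<and> s < t}" by (rule finite_subset[OF _ fin]) auto
    show ?thesis unfolding eq by (rule card_Un_disjoint[OF f1 f2]) auto
  qed
  moreover have "card {(s, t). s \<in> S \<and> t \<in> T \<and> s < t} = inv_count T S"
  proof -
    have "{(s, t). s \<in> S \<and> t \<in> T \<and> s < t} = prod.swap ` {(s, t). s \<in> T \<and> t \<in> S \<and> t < s}"
      by force
    moreover have "inj_on prod.swap X" for X :: "(nat \<times> nat) set" by (rule inj_onI) (metis swap_swap)
    ultimately show ?thesis unfolding inv_count_def by (simp add: card_image)
  qed
  ultimately show ?thesis by (simp add: inv_count_def card_cartesian_product)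
qed

lemma inv_count_empty [simp]: "inv_count {} T = 0" "inv_count S {} = 0"
  by (simp_all add: inv_count_def)


lemma sign1:
  fixes S T :: "nat set"
  assumes "finite S" "finite T" "S \<inter> T = {}" "j \<in> S"
  shows "sgn S T * sgj (S \<union> T) j = sgj S j * sgn (S - {j}) T"
proof -
  have a: "inv_count S T = inv_count (S - {j}) T + card {t\<in>T. t < j}"
    using assms by (intro inv_count_remove_left)
  have b: "card {x\<in>S \<union> T. x < j} = card {s\<in>S. s < j} + card {t\<in>T. t < j}"
    using assms by (intro card_lt_union)
  show ?thesis unfolding sgn_def sgj_def power_add[symmetric] a b
    by (rule m1_eq) presburger
qed

lemma sign2:
  fixes S T :: "nat set"
  assumes "finite S" "finite T" "S \<inter> T = {}" "j \<in> T"
  shows "sgn S T * sgj (S \<union> T) j = (-1) ^ card S * sgj T j * sgn S (T - {j})"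
proof -
  have a: "inv_count S T = inv_count S (T - {j}) + card {s\<in>S. j < s}"
    using assms by (intro inv_count_remove_right)
  have b: "card {x\<in>S \<union> T. x < j} = card {s\<in>S. s < j} + card {t\<in>T. t < j}"
    using assms by (intro card_lt_union)
  have c: "card {s\<in>S. s < j} + card {s\<in>S. j < s} = card S"
    using assms by (intro card_lt_gt) auto
  show ?thesis unfolding sgn_def sgj_def power_add[symmetric] a b
    by (rule m1_eq) (use c in presburger)
qed

lemma sign3:
  fixes S T :: "nat set"
  assumes "finite S" "finite T" "S \<inter> T = {j0}"
  shows "sgj S j0 * sgn (S - {j0}) T = - ((-1) ^ card S * sgj T j0 * sgn S (T - {j0}))"
proof -
  have j0S: "j0 \<in> S" and j0T: "j0 \<in> T" using assms(3) by auto
  let ?A = "S - {j0}" and ?B = "T - {j0}"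
  have c1: "card {s\<in>S. s < j0} = card {s\<in>?A. s < j0}" using card_lt_remove_ge[of j0 j0 S] by simp
  have c2: "card {s\<in>T. s < j0} = card {s\<in>?B. s < j0}" using card_lt_remove_ge[of j0 j0 T] by simp
  have i1: "inv_count ?A T = inv_count ?A ?B + card {s\<in>?A. j0 < s}"
    using assms j0T by (intro inv_count_remove_right) auto
  have i2: "inv_count S ?B = inv_count ?A ?B + card {t\<in>?B. t < j0}"
    using assms j0S by (intro inv_count_remove_left) auto
  have c3: "card {s\<in>?A. s < j0} + card {s\<in>?A. j0 < s} = card ?A"
    using assms by (intro card_lt_gt) auto
  have c4: "card S = card ?A + 1" using card.remove[OF assms(1) j0S] by simp
  have "sgj S j0 * sgn (S - {j0}) T = (-1) ^ (card {s\<in>?A. s < j0} + (inv_count ?A ?B + card {s\<in>?A. j0 < s}))"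
    unfolding sgj_def sgn_def c1 i1 power_add by simp
  also have "\<dots> = (-1) ^ (1 + card S + card {s\<in>?B. s < j0} + (inv_count ?A ?B + card {t\<in>?B. t < j0}))"
    by (rule m1_eq) (use c3 c4 in presburger)
  also have "\<dots> = - ((-1) ^ card S * sgj T j0 * sgn S (T - {j0}))"
    unfolding sgj_def sgn_def c2 i2 power_add by simp
  finally show ?thesis .
qed

lemma sign4:
  fixes S :: "nat set"
  assumes "finite S" "l \<in> S" "l' \<in> S" "l \<noteq> l'"
  shows "sgj S l * sgj (S - {l}) l' = - (sgj S l' * sgj (S - {l'}) l)"
proof (cases "l < l'")
  case True
  have a: "card {s\<in>S - {l}. s < l'} + 1 = card {s\<in>S. s < l'}"
    using assms True by (intro card_lt_remove_less) auto
  have b: "card {s\<in>S - {l'}. s < l} = card {s\<in>S. s < l}"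
    using True by (intro card_lt_remove_ge) simp
  have "sgj S l * sgj (S - {l}) l' = (-1) ^ (card {s\<in>S. s < l} + card {s\<in>S - {l}. s < l'})"
    by (simp add: sgj_def power_add)
  also have "\<dots> = (-1) ^ (1 + card {s\<in>S. s < l'} + card {s\<in>S - {l'}. s < l})"
    by (rule m1_eq) (use a b in presburger)
  also have "\<dots> = - (sgj S l' * sgj (S - {l'}) l)" by (simp add: sgj_def power_add)
  finally show ?thesis .
next
  case False
  then have lt: "l' < l" using assms(4) by simp
  have a: "card {s\<in>S - {l'}. s < l} + 1 = card {s\<in>S. s < l}"
    using assms lt by (intro card_lt_remove_less) auto
  have b: "card {s\<in>S - {l}. s < l'} = card {s\<in>S. s < l'}"
    using lt by (intro card_lt_remove_ge) simp
  have "sgj S l * sgj (S - {l}) l' = (-1) ^ (card {s\<in>S. s < l} + card {s\<in>S - {l}. s < l'})"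
    by (simp add: sgj_def power_add)
  also have "\<dots> = (-1) ^ (1 + card {s\<in>S. s < l'} + card {s\<in>S - {l'}. s < l})"
    by (rule m1_eq) (use a b in presburger)
  also have "\<dots> = - (sgj S l' * sgj (S - {l'}) l)" by (simp add: sgj_def power_add)
  finally show ?thesis .
qed

lemma sign5:
  fixes S T :: "nat set"
  assumes "finite S" "finite T" "S \<inter> T = {}"
  shows "sgn S T = (-1) ^ (card S * card T) * sgn T S"
proof -
  have "inv_count S T + inv_count T S = card S * card T" using assms by (rule inv_count_comm)
  then show ?thesis unfolding sgn_def power_add[symmetric] by (intro m1_eq) presburger
qed


lemma sum_single_nz:
  assumes "finite S" "j0 \<in> S" "\<And>j. j \<in> S \<Longrightarrow> j \<noteq> j0 \<Longrightarrow> f j = (0::'b::comm_monoid_add)"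
  shows "sum f S = f j0"
proof -
  have "sum f S = f j0 + sum f (S - {j0})" using assms(1,2) by (rule sum.remove)
  also have "sum f (S - {j0}) = 0" using assms(3) by (intro sum.neutral) auto
  finally show ?thesis by simp
qed

lemma mono_mult_pair: "mono_mult (x, S) (y, T) = (if S \<inter> T = {} then sg (x + y, S \<union> T) (of_int (sgn S T)) else 0)"
  by (simp add: mono_mult_def)

lemma qm_pair: "qm p i (a, S) = (\<Sum>j\<in>S. sg (a + sg j (p ^ i), S - {j}) (of_int (sgj S j)))"
  by (simp add: qm_def)

lemma qm_mono_deriv:
  assumes fS: "finite S" and fT: "finite T"
  shows "lin_ext (qm p i) (mono_mult (a, S) (b, T) :: 'a::comm_ring_1 coh) =
     lin_ext (\<lambda>k. mono_mult k (b, T)) (qm p i (a, S))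
     + smul ((-1) ^ card S) (lin_ext (\<lambda>k'. mono_mult (a, S) k') (qm p i (b, T)))"
proof -
  let ?E = "\<lambda>j. sg j (p ^ i) :: nat \<Rightarrow>\<^sub>0 nat"
  have R1: "lin_ext (\<lambda>k. mono_mult k (b, T)) (qm p i (a, S)) =
      (\<Sum>j\<in>S. smul (of_int (sgj S j)) (mono_mult (a + ?E j, S - {j}) (b, T)) :: 'a coh)"
    by (simp add: qm_pair lin_ext_sum)
  have R2: "smul ((-1) ^ card S) (lin_ext (\<lambda>k'. mono_mult (a, S) k') (qm p i (b, T))) =
      (\<Sum>j\<in>T. smul (of_int ((-1) ^ card S * sgj T j)) (mono_mult (a, S) (b + ?E j, T - {j})) :: 'a coh)"
    by (simp add: qm_pair lin_ext_sum smul_sum)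
  show ?thesis
  proof (cases "S \<inter> T = {}")
    case disj: True
    have "lin_ext (qm p i) (mono_mult (a, S) (b, T) :: 'a coh) =
        (\<Sum>j\<in>S \<union> T. sg (a + b + ?E j, S \<union> T - {j}) (of_int (sgn S T * sgj (S \<union> T) j)))"
      using disj by (simp add: mono_mult_pair qm_pair smul_sum mult.commute)
    also have "\<dots> = (\<Sum>j\<in>S. sg (a + b + ?E j, S \<union> T - {j}) (of_int (sgn S T * sgj (S \<union> T) j)))
        + (\<Sum>j\<in>T. sg (a + b + ?E j, S \<union> T - {j}) (of_int (sgn S T * sgj (S \<union> T) j)))"
      by (rule sum.union_disjoint) (use fS fT disj in auto)
    also have "(\<Sum>j\<in>S. sg (a + b + ?E j, S \<union> T - {j}) (of_int (sgn S T * sgj (S \<union> T) j)))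
        = (\<Sum>j\<in>S. smul (of_int (sgj S j)) (mono_mult (a + ?E j, S - {j}) (b, T)) :: 'a coh)"
    proof (rule sum.cong[OF refl])
      fix j assume j: "j \<in> S"
      have d: "(S - {j}) \<inter> T = {}" using disj by auto
      have st: "S \<union> T - {j} = (S - {j}) \<union> T" using disj j by auto
      show "sg (a + b + ?E j, S \<union> T - {j}) (of_int (sgn S T * sgj (S \<union> T) j)) =
          smul (of_int (sgj S j)) (mono_mult (a + ?E j, S - {j}) (b, T) :: 'a coh)"
        unfolding mono_mult_pair using d st sign1[OF fS fT disj j]
        by (simp add: ac_simps)
    qed
    also have "(\<Sum>j\<in>T. sg (a + b + ?E j, S \<union> T - {j}) (of_int (sgn S T * sgj (S \<union> T) j)))
        = (\<Sum>j\<in>T. smul (of_int ((-1) ^ card S * sgj T j)) (mono_mult (a, S) (b + ?E j, T - {j})) :: 'a coh)"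
    proof (rule sum.cong[OF refl])
      fix j assume j: "j \<in> T"
      have d: "S \<inter> (T - {j}) = {}" using disj by auto
      have st: "S \<union> T - {j} = S \<union> (T - {j})" using disj j by auto
      show "sg (a + b + ?E j, S \<union> T - {j}) (of_int (sgn S T * sgj (S \<union> T) j)) =
          smul (of_int ((-1) ^ card S * sgj T j)) (mono_mult (a, S) (b + ?E j, T - {j}) :: 'a coh)"
        unfolding mono_mult_pair using d st sign2[OF fS fT disj j]
        by (simp add: ac_simps)
    qed
    finally show ?thesis unfolding R1 R2 .
  next
    case ndisj: False
    have L: "lin_ext (qm p i) (mono_mult (a, S) (b, T) :: 'a coh) = 0"
      using ndisj by (simp add: mono_mult_pair)
    show ?thesis
    proof (cases "\<exists>j0. S \<inter> T = {j0}")
      case True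
      then obtain j0 where j0: "S \<inter> T = {j0}" by blast
      have j0S: "j0 \<in> S" and j0T: "j0 \<in> T" using j0 by auto
      have U1: "(S - {j0}) \<union> T = S \<union> T" and U2: "S \<union> (T - {j0}) = S \<union> T" using j0 by auto
      have D1: "(S - {j0}) \<inter> T = {}" and D2: "S \<inter> (T - {j0}) = {}" using j0 by auto
      have s1: "(\<Sum>j\<in>S. smul (of_int (sgj S j)) (mono_mult (a + ?E j, S - {j}) (b, T)) :: 'a coh)
          = sg (a + b + ?E j0, S \<union> T) (of_int (sgj S j0 * sgn (S - {j0}) T))"
      proof -
        have "(\<Sum>j\<in>S. smul (of_int (sgj S j)) (mono_mult (a + ?E j, S - {j}) (b, T)) :: 'a coh)
            = smul (of_int (sgj S j0)) (mono_mult (a + ?E j0, S - {j0}) (b, T))"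
        proof (rule sum_single_nz[OF fS j0S])
          fix j assume "j \<in> S" "j \<noteq> j0"
          then have "(S - {j}) \<inter> T \<noteq> {}" using j0 by auto
          then show "smul (of_int (sgj S j)) (mono_mult (a + ?E j, S - {j}) (b, T)) = (0 :: 'a coh)"
            by (simp add: mono_mult_pair)
        qed
        then show ?thesis using D1 U1 by (simp add: mono_mult_pair ac_simps)
      qed
      have s2: "(\<Sum>j\<in>T. smul (of_int ((-1) ^ card S * sgj T j)) (mono_mult (a, S) (b + ?E j, T - {j})) :: 'a coh)
          = sg (a + b + ?E j0, S \<union> T) (of_int ((-1) ^ card S * sgj T j0 * sgn S (T - {j0})))"
      proof -
        have "(\<Sum>j\<in>T. smul (of_int ((-1) ^ card S * sgj T j)) (mono_mult (a, S) (b + ?E j, T - {j})) :: 'a coh)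
            = smul (of_int ((-1) ^ card S * sgj T j0)) (mono_mult (a, S) (b + ?E j0, T - {j0}))"
        proof (rule sum_single_nz[OF fT j0T])
          fix j assume "j \<in> T" "j \<noteq> j0"
          then have "S \<inter> (T - {j}) \<noteq> {}" using j0 by auto
          then show "smul (of_int ((-1) ^ card S * sgj T j)) (mono_mult (a, S) (b + ?E j, T - {j})) = (0 :: 'a coh)"
            by (simp add: mono_mult_pair)
        qed
        then show ?thesis using D2 U2 by (simp add: mono_mult_pair ac_simps)
      qed
      have "sg (a + b + ?E j0, S \<union> T) (of_int (sgj S j0 * sgn (S - {j0}) T))
          + sg (a + b + ?E j0, S \<union> T) (of_int ((-1) ^ card S * sgj T j0 * sgn S (T - {j0}))) = (0 :: 'a coh)"
        unfolding single_add[symmetric] of_int_add[symmetric] sign3[OF fS fT j0] by simp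
      then show ?thesis unfolding L R1 R2 s1 s2 by simp
    next
      case False
      have z1: "(\<Sum>j\<in>S. smul (of_int (sgj S j)) (mono_mult (a + ?E j, S - {j}) (b, T)) :: 'a coh) = 0"
      proof (rule sum.neutral, rule ballI)
        fix j assume "j \<in> S"
        then have "(S - {j}) \<inter> T \<noteq> {}" using False ndisj by auto
        then show "smul (of_int (sgj S j)) (mono_mult (a + ?E j, S - {j}) (b, T)) = (0 :: 'a coh)"
          by (simp add: mono_mult_pair)
      qed
      have z2: "(\<Sum>j\<in>T. smul (of_int ((-1) ^ card S * sgj T j)) (mono_mult (a, S) (b + ?E j, T - {j})) :: 'a coh) = 0"
      proof (rule sum.neutral, rule ballI)
        fix j assume "j \<in> T"
        then have "S \<inter> (T - {j}) \<noteq> {}" using False ndisj by auto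
        then show "smul (of_int ((-1) ^ card S * sgj T j)) (mono_mult (a, S) (b + ?E j, T - {j})) = (0 :: 'a coh)"
          by (simp add: mono_mult_pair)
      qed
      show ?thesis unfolding L R1 R2 z1 z2 by simp
    qed
  qed
qed


lemma mono_mult_comm:
  assumes "finite S" "finite T"
  shows "mono_mult (a, S) (b, T) = smul ((-1) ^ (card S * card T)) (mono_mult (b, T) (a, S) :: 'a::comm_ring_1 coh)"
proof (cases "S \<inter> T = {}")
  case True
  then have "T \<inter> S = {}" by auto
  then show ?thesis using True sign5[OF assms True]
    by (simp add: mono_mult_pair ac_simps)
next
  case False
  then have "T \<inter> S \<noteq> {}" by auto
  then show ?thesis using False by (simp add: mono_mult_pair)
qed

lemma offdiag_swap:
  assumes "finite S"
  shows "(\<Sum>l\<in>S. \<Sum>l'\<in>S - {l}. f l l') = (\<Sum>l'\<in>S. \<Sum>l\<in>S - {l'}. (f l l' :: 'b::comm_monoid_add))"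
proof -
  have "(\<Sum>l\<in>S. \<Sum>l'\<in>{l'. l' \<in> S \<and> l \<noteq> l'}. f l l') = (\<Sum>l'\<in>S. \<Sum>l\<in>{l. l \<in> S \<and> l \<noteq> l'}. f l l')"
    by (rule sum.swap_restrict[OF assms assms])
  moreover have "{l'. l' \<in> S \<and> l \<noteq> l'} = S - {l}" for l by auto
  moreover have "{l. l \<in> S \<and> l \<noteq> l'} = S - {l'}" for l' by auto
  ultimately show ?thesis by simp
qed

lemma qm_anticomm_mono:
  assumes fS: "finite S"
  shows "lin_ext (qm p i) (qm p j (a, S)) = - lin_ext (qm p j) (qm p i (a, S) :: 'a::comm_ring_1 coh)"
proof -
  let ?E = "\<lambda>i l. sg l (p ^ i) :: nat \<Rightarrow>\<^sub>0 nat"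
  have A: "lin_ext (qm p i) (qm p j (a, S)) =
     (\<Sum>l\<in>S. \<Sum>l'\<in>S - {l}. sg (a + ?E j l + ?E i l', S - {l} - {l'}) (of_int (sgj S l * sgj (S - {l}) l')) :: 'a coh)"
    by (simp add: qm_pair lin_ext_sum smul_sum mult.commute)
  have B: "lin_ext (qm p j) (qm p i (a, S)) =
     (\<Sum>l\<in>S. \<Sum>l'\<in>S - {l}. sg (a + ?E i l + ?E j l', S - {l} - {l'}) (of_int (sgj S l * sgj (S - {l}) l')) :: 'a coh)"
    by (simp add: qm_pair lin_ext_sum smul_sum mult.commute)
  also have "\<dots> = (\<Sum>l'\<in>S. \<Sum>l\<in>S - {l'}. sg (a + ?E i l + ?E j l', S - {l} - {l'}) (of_int (sgj S l * sgj (S - {l}) l')) :: 'a coh)"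
    by (rule offdiag_swap[OF fS])
  also have "\<dots> = (\<Sum>l\<in>S. \<Sum>l'\<in>S - {l}. - sg (a + ?E j l + ?E i l', S - {l} - {l'}) (of_int (sgj S l * sgj (S - {l}) l')) :: 'a coh)"
  proof (rule sum.cong[OF refl], rule sum.cong[OF refl])
    fix l l' assume l: "l \<in> S" and l': "l' \<in> S - {l}"
    have "sgj S l' * sgj (S - {l'}) l = - (sgj S l * sgj (S - {l}) l')"
      using sign4[OF fS l, of l'] l' by simp
    moreover have "S - {l'} - {l} = S - {l} - {l'}" by auto
    ultimately show "sg (a + ?E i l' + ?E j l, S - {l'} - {l}) (of_int (sgj S l' * sgj (S - {l'}) l)) =
        (- sg (a + ?E j l + ?E i l', S - {l} - {l'}) (of_int (sgj S l * sgj (S - {l}) l')) :: 'a coh)"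
      by (simp add: ac_simps single_uminus)
  qed
  also have "\<dots> = - lin_ext (qm p i) (qm p j (a, S))"
    unfolding A by (simp add: sum_negf)
  finally show ?thesis by simp
qed


definition hom :: "nat \<Rightarrow> nat \<Rightarrow> 'a::ring_1 coh \<Rightarrow> bool" where
  "hom n k x \<longleftrightarrow> (\<forall>m\<in>ks x. snd m \<subseteq> {..<n} \<and> card (snd m) = k)"

lemma hom_fin: "hom n k x \<Longrightarrow> m \<in> ks x \<Longrightarrow> finite (snd m)"
  unfolding hom_def using finite_subset by blast

lemma hom_card: "hom n k x \<Longrightarrow> m \<in> ks x \<Longrightarrow> card (snd m) = k"
  unfolding hom_def by blast

lemma hom_u: "hom n n (u n :: 'a::ring_1 coh)"
  by (simp add: hom_def u_def)

lemma hom_zero [simp]: "hom n k (0 :: 'a::ring_1 coh)"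
  by (simp add: hom_def)

lemma hom_smul: "hom n k x \<Longrightarrow> hom n k (smul c (x :: 'a::ring_1 coh))"
  unfolding hom_def by (auto simp: in_keys_iff)

lemma hom_uminus: "hom n k x \<Longrightarrow> hom n k (- (x :: 'a::ring_1 coh))"
  unfolding hom_def by auto

lemma keys_qm: "ks (qm p i m :: 'a::ring_1 coh) \<subseteq> (\<Union>j\<in>snd m. {(fst m + sg j (p ^ i), snd m - {j})})"
proof -
  have "ks (qm p i m :: 'a coh) \<subseteq> (\<Union>j\<in>snd m. ks (sg (fst m + sg j (p ^ i), snd m - {j}) (of_int (sgj (snd m) j) :: 'a)))"
    unfolding qm_def by (rule keys_sum)
  also have "\<dots> \<subseteq> (\<Union>j\<in>snd m. {(fst m + sg j (p ^ i), snd m - {j})})"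
    by (rule UN_mono) auto
  finally show ?thesis .
qed

lemma hom_Q: "hom n k x \<Longrightarrow> hom n (k - 1) (lin_ext (qm p i) (x :: 'a::ring_1 coh))"
proof -
  assume h: "hom n k x"
  show ?thesis unfolding hom_def
  proof
    fix m' assume "m' \<in> ks (lin_ext (qm p i) x)"
    then obtain m where m: "m \<in> ks x" and m': "m' \<in> ks (qm p i m :: 'a coh)"
      using keys_lin_ext by blast
    then obtain j where j: "j \<in> snd m" and eq: "m' = (fst m + sg j (p ^ i), snd m - {j})"
      using keys_qm by blast
    have "snd m \<subseteq> {..<n}" "card (snd m) = k" using h m by (auto simp: hom_def)
    moreover have "finite (snd m)" using hom_fin[OF h m] .
    ultimately show "snd m' \<subseteq> {..<n} \<and> card (snd m') = k - 1"
      using eq j by auto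
  qed
qed

lemma cmult_smul_left: "cmult (smul c x) y = smul c (cmult x (y :: 'a::comm_ring_1 coh))"
  by (simp add: cmult_lin lin_ext_smul)

lemma cmult_smul_right: "cmult x (smul c y) = smul c (cmult x (y :: 'a::comm_ring_1 coh))"
  by (simp add: cmult_lin lin_ext_smul lin_ext_fun_smul)

lemma cmult_zero_left [simp]: "cmult 0 y = (0 :: 'a::ring_1 coh)"
  by (simp add: cmult_def)

lemma cmult_zero_right [simp]: "cmult x 0 = (0 :: 'a::ring_1 coh)"
  by (simp add: cmult_def)

lemma Q_smul: "lin_ext L (smul c x) = smul c (lin_ext L (x :: 'a::ring_1 coh))"
  by (rule lin_ext_smul)

lemma deriv:
  assumes hx: "hom n k x" and hy: "hom n l y"
  shows "lin_ext (qm p i) (cmult x y) = cmult (lin_ext (qm p i) x) y + smul ((-1) ^ k) (cmult x (lin_ext (qm p i) (y :: 'a::comm_ring_1 coh)))"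
proof -
  let ?Q = "lin_ext (qm p i) :: 'a coh \<Rightarrow> 'a coh"
  let ?A = "\<lambda>m m'. lin_ext (\<lambda>k. mono_mult k m') (qm p i m) :: 'a coh"
  let ?B = "\<lambda>m m'. lin_ext (\<lambda>k'. mono_mult m k') (qm p i m') :: 'a coh"
  have "?Q (cmult x y) = lin_ext (\<lambda>m. lin_ext (\<lambda>m'. ?Q (mono_mult m m')) y) x"
    by (simp add: cmult_lin lin_ext_comp)
  also have "\<dots> = lin_ext (\<lambda>m. lin_ext (\<lambda>m'. ?A m m' + smul ((-1) ^ k) (?B m m')) y) x"
  proof (rule lin_ext_cong, rule lin_ext_cong)
    fix m m' assume m: "m \<in> ks x" and m': "m' \<in> ks y"
    obtain a S where mS: "m = (a, S)" by (cases m)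
    obtain b T where mT: "m' = (b, T)" by (cases m')
    have "finite S" "card S = k" using hom_fin[OF hx m] hom_card[OF hx m] mS by auto
    moreover have "finite T" using hom_fin[OF hy m'] mT by auto
    ultimately show "?Q (mono_mult m m') = ?A m m' + smul ((-1) ^ k) (?B m m')"
      unfolding mS mT using qm_mono_deriv[of S T p i a b] by simp
  qed
  also have "\<dots> = lin_ext (\<lambda>m. lin_ext (\<lambda>m'. ?A m m') y) x + smul ((-1) ^ k) (lin_ext (\<lambda>m. lin_ext (\<lambda>m'. ?B m m') y) x)"
    by (simp add: lin_ext_fun_add lin_ext_fun_smul)
  also have "lin_ext (\<lambda>m. lin_ext (\<lambda>m'. ?A m m') y) x = cmult (?Q x) y"
  proof -
    have "cmult (?Q x) y = lin_ext (\<lambda>m. lin_ext (\<lambda>k. lin_ext (\<lambda>m'. mono_mult k m') y) (qm p i m)) x"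
      by (simp add: cmult_lin lin_ext_comp)
    also have "\<dots> = lin_ext (\<lambda>m. lin_ext (\<lambda>m'. ?A m m') y) x"
      by (simp add: lin_ext_swap[of _ y])
    finally show ?thesis by simp
  qed
  also have "lin_ext (\<lambda>m. lin_ext (\<lambda>m'. ?B m m') y) x = cmult x (?Q y)"
    by (simp add: cmult_lin lin_ext_comp)
  finally show ?thesis .
qed

lemma comm:
  assumes hx: "hom n k x" and hy: "hom n l y"
  shows "cmult x y = smul ((-1) ^ (k * l)) (cmult y (x :: 'a::comm_ring_1 coh))"
proof -
  have "cmult x y = lin_ext (\<lambda>m. lin_ext (\<lambda>m'. smul ((-1) ^ (k * l)) (mono_mult m' m)) y) x"
    unfolding cmult_lin
  proof (rule lin_ext_cong, rule lin_ext_cong)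
    fix m m' assume m: "m \<in> ks x" and m': "m' \<in> ks y"
    obtain a S where mS: "m = (a, S)" by (cases m)
    obtain b T where mT: "m' = (b, T)" by (cases m')
    have "finite S" "card S = k" using hom_fin[OF hx m] hom_card[OF hx m] mS by auto
    moreover have "finite T" "card T = l" using hom_fin[OF hy m'] hom_card[OF hy m'] mT by auto
    ultimately show "mono_mult m m' = smul ((-1) ^ (k * l)) (mono_mult m' m :: 'a coh)"
      unfolding mS mT using mono_mult_comm[of S T a b] by simp
  qed
  also have "\<dots> = smul ((-1) ^ (k * l)) (lin_ext (\<lambda>m'. lin_ext (\<lambda>m. mono_mult m' m) x) y)"
    by (simp add: lin_ext_fun_smul lin_ext_swap[of _ y])
  also have "\<dots> = smul ((-1) ^ (k * l)) (cmult y x)" by (simp add: cmult_lin)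
  finally show ?thesis .
qed

lemma anticomm:
  assumes hx: "hom n k x"
  shows "lin_ext (qm p i) (lin_ext (qm p j) x) = - lin_ext (qm p j) (lin_ext (qm p i) (x :: 'a::comm_ring_1 coh))"
proof -
  have "lin_ext (qm p i) (lin_ext (qm p j) x) = lin_ext (\<lambda>m. - lin_ext (qm p j) (qm p i m)) x"
    unfolding lin_ext_comp
  proof (rule lin_ext_cong)
    fix m assume m: "m \<in> ks x"
    obtain a S where mS: "m = (a, S)" by (cases m)
    have "finite S" using hom_fin[OF hx m] mS by auto
    then show "lin_ext (qm p i) (qm p j m) = - lin_ext (qm p j) (qm p i m :: 'a coh)"
      unfolding mS by (rule qm_anticomm_mono)
  qed
  then show ?thesis by (simp add: lin_ext_fun_uminus lin_ext_comp)
qed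

lemma u_kill:
  assumes hw: "hom n k w" and k: "k \<ge> 1"
  shows "cmult (u n) w = (0 :: 'a::comm_ring_1 coh)"
proof -
  have "cmult (u n) w = lin_ext (\<lambda>m'. mono_mult (0, {..<n}) m') w"
    by (simp add: cmult_lin u_def)
  also have "\<dots> = lin_ext (\<lambda>m'. 0) w"
  proof (rule lin_ext_cong)
    fix m' assume m': "m' \<in> ks w"
    have "snd m' \<subseteq> {..<n}" "card (snd m') = k" using hw m' by (auto simp: hom_def)
    then have "snd m' \<noteq> {}" using k by auto
    then have "{..<n} \<inter> snd m' \<noteq> {}" using \<open>snd m' \<subseteq> {..<n}\<close> by auto
    then show "mono_mult (0, {..<n}) m' = (0 :: 'a coh)" by (simp add: mono_mult_def)
  qed
  finally show ?thesis by (simp add: lin_ext_fun_zero)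
qed


lemma QI_empty: "QI p n {} = u n"
  by (simp add: QI_def)

lemma QI_min:
  assumes "finite I" "I \<noteq> {}"
  shows "QI p n I = milnorQ p (Min I) (QI p n (I - {Min I}))"
  using assms by (simp add: QI_def sorted_list_of_set_nonempty)

lemma hom_QI:
  assumes "finite I"
  shows "hom n (n - card I) (QI CARD('p::prime_card) n I :: 'p mod_ring coh)"
  using assms
proof (induction "card I" arbitrary: I rule: less_induct)
  case less
  show ?case
  proof (cases "I = {}")
    case True then show ?thesis by (simp add: QI_empty hom_u)
  next
    case False
    have mi: "Min I \<in> I" using False less.prems by simp
    have c: "card (I - {Min I}) < card I" by (rule card_Diff1_less[OF less.prems mi])
    have h: "hom n (n - card (I - {Min I})) (QI CARD('p) n (I - {Min I}) :: 'p mod_ring coh)"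
      using less.hyps[OF c] less.prems by simp
    have cpos: "card I > 0" using less.prems False by (simp add: card_gt_0_iff)
    have "n - card (I - {Min I}) - 1 = n - card I" using mi less.prems cpos by (simp add: card_Diff_singleton)
    then show ?thesis using hom_Q[OF h, of "CARD('p)" "Min I"]
      by (simp add: QI_min[OF less.prems False] milnorQ_mod_ring)
  qed
qed

lemma two_ne_zero_mod_ring:
  assumes "CARD('p::prime_card) > 2"
  shows "(2 :: 'p mod_ring) \<noteq> 0"
proof
  assume "(2 :: 'p mod_ring) = 0"
  then have "(of_nat 2 :: 'p mod_ring) = 0" by simp
  then have "CHAR('p mod_ring) dvd 2" by (simp only: of_nat_eq_0_iff_char_dvd)
  then have "CARD('p) dvd 2" by simp
  then have "CARD('p) \<le> 2" by (simp add: dvd_imp_le)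
  then show False using assms by simp
qed

lemma QQ_zero:
  assumes p2: "CARD('p::prime_card) > 2" and hx: "hom n k x"
  shows "milnorQ CARD('p) i (milnorQ CARD('p) i x) = (0 :: 'p mod_ring coh)"
proof -
  define y :: "'p mod_ring coh" where "y = lin_ext (qm CARD('p) i) (lin_ext (qm CARD('p) i) x)"
  have a: "y = - y" unfolding y_def by (rule anticomm[OF hx])
  have "y = 0"
  proof (rule poly_mapping_eqI)
    fix m
    have "lk y m = - lk y m" using arg_cong[OF a, of "\<lambda>z. lk z m"] by (simp only: lookup_uminus)
    then have "lk y m + lk y m = 0" by (simp only: eq_neg_iff_add_eq_0)
    then have "2 * lk y m = 0" by (simp only: mult_2)
    then show "lk y m = lk 0 m" using two_ne_zero_mod_ring[OF p2] by simp
  qed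
  then show ?thesis unfolding y_def milnorQ_mod_ring .
qed

lemma QI_reorder:
  assumes "finite I" "i \<in> I"
  shows "(QI CARD('p::prime_card) n I :: 'p mod_ring coh) =
     smul (of_int ((-1) ^ card {l\<in>I. l < i})) (milnorQ CARD('p) i (QI CARD('p) n (I - {i})))"
  using assms
proof (induction "card I" arbitrary: I rule: less_induct)
  case less
  let ?Q = "milnorQ CARD('p) :: nat \<Rightarrow> 'p mod_ring coh \<Rightarrow> 'p mod_ring coh"
  let ?X = "QI CARD('p) n :: nat set \<Rightarrow> 'p mod_ring coh"
  have ne: "I \<noteq> {}" using less.prems by auto
  define i0 where "i0 = Min I"
  have i0I: "i0 \<in> I" unfolding i0_def using less.prems ne by simp
  have i0le: "\<forall>l\<in>I. i0 \<le> l" unfolding i0_def using less.prems by simp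
  have XI: "?X I = ?Q i0 (?X (I - {i0}))" unfolding i0_def by (rule QI_min[OF less.prems(1) ne])
  show ?case
  proof (cases "i = i0")
    case True
    have "{l\<in>I. l < i} = {}" using i0le True by auto
    then have c0: "card {l\<in>I. l < i} = 0" by (simp only: card.empty)
    show ?thesis unfolding c0 using XI True by simp
  next
    case False
    let ?I' = "I - {i0}"
    have iI': "i \<in> ?I'" using less.prems False by simp
    have c: "card ?I' < card I" by (rule card_Diff1_less[OF less.prems(1) i0I])
    have IH: "?X ?I' = smul (of_int ((-1) ^ card {l\<in>?I'. l < i})) (?Q i (?X (?I' - {i})))"
      using less.hyps[OF c] less.prems iI' by simp
    have hY: "hom n (n - card (?I' - {i})) (?X (?I' - {i}))"
      using less.prems by (intro hom_QI) simp
    have ne2: "I - {i} \<noteq> {}" using i0I False by auto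
    have min2: "Min (I - {i}) = i0"
      using i0I i0le False less.prems by (intro Min_eqI) auto
    have e2: "(I - {i}) - {i0} = ?I' - {i}" by auto
    have X2: "?X (I - {i}) = ?Q i0 (?X (?I' - {i}))"
      using QI_min[OF _ ne2, of "CARD('p)" n] less.prems min2 e2 by simp
    have lt: "i0 < i" using i0le less.prems False by (metis le_neq_implies_less)
    have cc: "card {l\<in>?I'. l < i} + 1 = card {l\<in>I. l < i}"
      using card_lt_remove_less[OF less.prems(1) i0I lt] .
    have "?X I = ?Q i0 (smul (of_int ((-1) ^ card {l\<in>?I'. l < i})) (?Q i (?X (?I' - {i}))))"
      using XI IH by simp
    also have "\<dots> = smul (of_int ((-1) ^ card {l\<in>?I'. l < i})) (?Q i0 (?Q i (?X (?I' - {i}))))"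
      by (simp add: milnorQ_mod_ring lin_ext_smul)
    also have "?Q i0 (?Q i (?X (?I' - {i}))) = - ?Q i (?X (I - {i}))"
      using anticomm[OF hY, of "CARD('p)" i0 i] X2 by (simp add: milnorQ_mod_ring)
    also have "smul (of_int ((-1) ^ card {l\<in>?I'. l < i})) (- ?Q i (?X (I - {i}))) =
        smul (of_int ((-1) ^ card {l\<in>I. l < i})) (?Q i (?X (I - {i})))"
      unfolding cc[symmetric] by (simp add: smul_uminus smul_uminus_left[symmetric])
    finally show ?thesis .
  qed
qed

lemma Q_QI_in:
  assumes p2: "CARD('p::prime_card) > 2" and "finite I" "i \<in> I"
  shows "milnorQ CARD('p) i (QI CARD('p) n I) = (0 :: 'p mod_ring coh)"
proof -
  have h: "hom n (n - card (I - {i})) (QI CARD('p) n (I - {i}) :: 'p mod_ring coh)"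
    using assms by (intro hom_QI) simp
  show ?thesis
    unfolding QI_reorder[OF assms(2,3)]
    by (simp add: milnorQ_mod_ring lin_ext_smul QQ_zero[OF p2 h, unfolded milnorQ_mod_ring])
qed

lemma Q_QI_notin:
  assumes "finite I" "i \<notin> I"
  shows "milnorQ CARD('p::prime_card) i (QI CARD('p) n I) =
     smul (of_int ((-1) ^ card {l\<in>I. l < i})) (QI CARD('p) n (insert i I) :: 'p mod_ring coh)"
proof -
  have e1: "{l\<in>insert i I. l < i} = {l\<in>I. l < i}" by auto
  have e2: "insert i I - {i} = I" using assms(2) by auto
  have "(QI CARD('p) n (insert i I) :: 'p mod_ring coh) =
     smul (of_int ((-1) ^ card {l\<in>I. l < i})) (milnorQ CARD('p) i (QI CARD('p) n I))"
    using QI_reorder[of "insert i I" i n] assms(1) e1 e2 by simp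
  then have "smul (of_int ((-1) ^ card {l\<in>I. l < i})) (QI CARD('p) n (insert i I) :: 'p mod_ring coh) =
     smul (of_int ((-1) ^ card {l\<in>I. l < i} * (-1) ^ card {l\<in>I. l < i})) (milnorQ CARD('p) i (QI CARD('p) n I))"
    by simp
  also have "(-1::int) ^ card {l\<in>I. l < i} * (-1) ^ card {l\<in>I. l < i} = 1"
    by (simp add: power_add[symmetric])
  finally show ?thesis by simp
qed


definition Fs :: "nat \<Rightarrow> nat set \<Rightarrow> nat set \<Rightarrow> int" where
  "Fs n I J = (-1) ^ (n * card (I - I \<inter> J) + (card (I - I \<inter> J))\<^sup>2)
                     * sgn (I \<inter> J) (I - I \<inter> J) * sgn (I - I \<inter> J) J"

lemma parity_aux:
  fixes X Y :: nat
  assumes "N + K + r' = n" "kl + kg = K" "al + ag = r'"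
  shows "even ((X + n + (Y + 2 * r' + 1) + (c1 + kg) + (c2 + j)) +
               (1 + (kl + al) + N + j + X + Y + c1 + (c2 + ag)))"
  using assms by presburger

lemma main_sign:
  fixes I J :: "nat set"
  assumes fI: "finite I" and fJ: "finite J" and In: "I \<subseteq> {..<n}" and iI: "i \<in> I" and iJ: "i \<notin> J"
  shows "Fs n I J = (-1) ^ card {l\<in>I. l < i} * (- ((-1) ^ (n - card (I - {i})))) * (-1) ^ card {l\<in>J. l < i}
                   * Fs n (I - {i}) (insert i J)"
proof -
  define K where "K = I \<inter> J"
  define A where "A = I - K"
  define A' where "A' = A - {i}"
  have fK: "finite K" and fA: "finite A" and fA': "finite A'" using fI by (auto simp: K_def A_def A'_def)
  have iA: "i \<in> A" using iI iJ by (simp add: A_def K_def)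
  have iK: "i \<notin> K" using iJ by (simp add: K_def)
  have iA': "i \<notin> A'" by (simp add: A'_def)
  have e1: "(I - {i}) \<inter> insert i J = K" using iJ by (auto simp: K_def)
  have e2: "(I - {i}) - K = A'" by (auto simp: A'_def A_def K_def)
  have cA: "card A = Suc (card A')" using card.remove[OF fA iA] by (simp add: A'_def)
  have i1: "inv_count K A = inv_count K A' + card {k\<in>K. i < k}"
    unfolding A'_def using fK fA iA by (rule inv_count_remove_right)
  have i2: "inv_count A J = inv_count A' J + card {t\<in>J. t < i}"
    unfolding A'_def using fA fJ iA by (rule inv_count_remove_left)
  have i3: "inv_count A' (insert i J) = inv_count A' J + card {a\<in>A'. i < a}"
  proof -
    have "inv_count A' (insert i J) = inv_count A' (insert i J - {i}) + card {a\<in>A'. i < a}"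
      using fA' fJ by (intro inv_count_remove_right) auto
    moreover have "insert i J - {i} = J" using iJ by auto
    ultimately show ?thesis by simp
  qed
  have IKA: "I = K \<union> A" "K \<inter> A = {}" by (auto simp: A_def K_def)
  have c1: "card {l\<in>I. l < i} = card {l\<in>K. l < i} + card {l\<in>A. l < i}"
    unfolding IKA(1) using fK fA IKA(2) by (rule card_lt_union)
  have c2: "card {l\<in>A. l < i} = card {l\<in>A'. l < i}"
    unfolding A'_def using card_lt_remove_ge[of i i A] by simp
  have c3: "card {l\<in>K. l < i} + card {l\<in>K. i < l} = card K" using fK iK by (rule card_lt_gt)
  have c4: "card {l\<in>A'. l < i} + card {l\<in>A'. i < l} = card A'" using fA' iA' by (rule card_lt_gt)
  have cI: "card (I - {i}) = card K + card A'"
  proof -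
    have "I - {i} = K \<union> A'" using iK by (auto simp: A'_def A_def K_def)
    moreover have "K \<inter> A' = {}" by (auto simp: A'_def A_def K_def)
    ultimately show ?thesis using fK fA' by (simp add: card_Un_disjoint)
  qed
  have cIn: "card I \<le> n" using In card_mono[of "{..<n}" I] by simp
  have cI2: "card I = card K + card A" unfolding IKA(1) using fK fA IKA(2) by (simp add: card_Un_disjoint)
  define N where "N = n - card (I - {i})"
  have Ndef: "N + card K + card A' = n" using cI cI2 cA cIn by (simp add: N_def)
  have L: "Fs n I J = (-1) ^ (n * card A' + n + (card A' ^ 2 + 2 * card A' + 1) + (inv_count K A' + card {k\<in>K. i < k})
           + (inv_count A' J + card {t\<in>J. t < i}))"
  proof -
    have sq: "(Suc (card A'))^2 = card A'^2 + 2*card A' + 1" by (simp add: power2_eq_square)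
    have nm: "n * Suc (card A') = n * card A' + n" by simp
    show ?thesis
      unfolding Fs_def K_def[symmetric] A_def[symmetric] sgn_def i1 i2 cA
      by (simp only: nm sq power_add mult.assoc)
  qed
  have R: "(-1) ^ card {l\<in>I. l < i} * (- ((-1) ^ (n - card (I - {i})))) * (-1) ^ card {l\<in>J. l < i}
                   * Fs n (I - {i}) (insert i J) =
     (-1::int) ^ (1 + (card {l\<in>K. l < i} + card {l\<in>A'. l < i}) + N + card {l\<in>J. l < i}
        + n * card A' + card A' ^ 2 + inv_count K A' + (inv_count A' J + card {a\<in>A'. i < a}))"
    unfolding Fs_def e1 e2 sgn_def i3 c1 c2 N_def[symmetric]
    by (simp add: power_add)
  show ?thesis unfolding L R
    by (rule m1_eq, rule parity_aux[OF Ndef c3 c4])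
qed


lemma derivQ:
  assumes hx: "hom n k x" and hy: "hom n l y"
  shows "milnorQ CARD('p::prime_card) i (cmult x y) = cmult (milnorQ CARD('p) i x) y
     + smul ((-1) ^ k) (cmult x (milnorQ CARD('p) i (y :: 'p mod_ring coh)))"
  unfolding milnorQ_mod_ring by (rule deriv[OF hx hy])

lemma zero_lemma:
  assumes p2: "CARD('p::prime_card) > 2" and IJ: "I \<subseteq> J" and Jn: "J \<subseteq> {..<n}" and Jne: "J \<noteq> {..<n}"
  shows "cmult (QI CARD('p) n I) (QI CARD('p) n J) = (0 :: 'p mod_ring coh)"
  using IJ
proof (induction "card I" arbitrary: I rule: less_induct)
  case less
  have fJ: "finite J" using Jn finite_subset by blast
  have fI: "finite I" using less.prems fJ finite_subset by blast
  have hJ: "hom n (n - card J) (QI CARD('p) n J :: 'p mod_ring coh)" using fJ by (rule hom_QI)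
  show ?case
  proof (cases "I = {}")
    case True
    have "J \<subset> {..<n}" using Jn Jne by blast
    then have "card J < n" using psubset_card_mono[of "{..<n}" J] by simp
    then have "n - card J \<ge> 1" by simp
    then show ?thesis using True u_kill[OF hJ] by (simp add: QI_empty)
  next
    case False
    define i0 where "i0 = Min I"
    have i0I: "i0 \<in> I" unfolding i0_def using fI False by simp
    have c: "card (I - {i0}) < card I" by (rule card_Diff1_less[OF fI i0I])
    have IH: "cmult (QI CARD('p) n (I - {i0})) (QI CARD('p) n J) = (0 :: 'p mod_ring coh)"
      using less.hyps[OF c] less.prems by blast
    have hI': "hom n (n - card (I - {i0})) (QI CARD('p) n (I - {i0}) :: 'p mod_ring coh)"
      using fI by (intro hom_QI) simp
    have QJ: "milnorQ CARD('p) i0 (QI CARD('p) n J) = (0 :: 'p mod_ring coh)"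
      using Q_QI_in[OF p2 fJ] i0I less.prems by blast
    have XI: "QI CARD('p) n I = milnorQ CARD('p) i0 (QI CARD('p) n (I - {i0}) :: 'p mod_ring coh)"
      unfolding i0_def by (rule QI_min[OF fI False])
    have "milnorQ CARD('p) i0 (cmult (QI CARD('p) n (I - {i0})) (QI CARD('p) n J)) =
        cmult (milnorQ CARD('p) i0 (QI CARD('p) n (I - {i0}))) (QI CARD('p) n J)
        + smul ((-1) ^ (n - card (I - {i0}))) (cmult (QI CARD('p) n (I - {i0})) (milnorQ CARD('p) i0 (QI CARD('p) n J :: 'p mod_ring coh)))"
      by (rule derivQ[OF hI' hJ])
    then show ?thesis unfolding IH QJ XI by (simp add: milnorQ_mod_ring)
  qed
qed

lemma Fs_sub: "I \<subseteq> J \<Longrightarrow> Fs n I J = 1"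
proof -
  assume "I \<subseteq> J"
  then have e: "I - I \<inter> J = {}" by auto
  show ?thesis unfolding Fs_def e by (simp add: sgn_def)
qed

lemma main_ind:
  assumes p2: "CARD('p::prime_card) > 2"
  shows "\<forall>I J. I \<subseteq> {..<n} \<longrightarrow> J \<subseteq> {..<n} \<longrightarrow> card (I - J) = r \<longrightarrow>
     (I \<union> J \<noteq> {..<n} \<longrightarrow> cmult (QI CARD('p) n I) (QI CARD('p) n J) = (0 :: 'p mod_ring coh))
   \<and> (I \<union> J = {..<n} \<longrightarrow> cmult (QI CARD('p) n I) (QI CARD('p) n J) =
        smul (of_int (Fs n I J)) (cmult (QI CARD('p) n {..<n}) (QI CARD('p) n (I \<inter> J) :: 'p mod_ring coh)))"
proof (induction r)
  case 0
  show ?case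
  proof (intro allI impI)
    fix I J :: "nat set"
    assume In: "I \<subseteq> {..<n}" and Jn: "J \<subseteq> {..<n}" and c: "card (I - J) = 0"
    have fI: "finite I" using In finite_subset by blast
    have fJ: "finite J" using Jn finite_subset by blast
    have IJ: "I \<subseteq> J" using c fI by auto
    have hI: "hom n (n - card I) (QI CARD('p) n I :: 'p mod_ring coh)" using fI by (rule hom_QI)
    show "(I \<union> J \<noteq> {..<n} \<longrightarrow> cmult (QI CARD('p) n I) (QI CARD('p) n J) = (0 :: 'p mod_ring coh))
     \<and> (I \<union> J = {..<n} \<longrightarrow> cmult (QI CARD('p) n I) (QI CARD('p) n J) =
        smul (of_int (Fs n I J)) (cmult (QI CARD('p) n {..<n}) (QI CARD('p) n (I \<inter> J) :: 'p mod_ring coh)))"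
    proof (cases "J = {..<n}")
      case True
      have hJ: "hom n 0 (QI CARD('p) n J :: 'p mod_ring coh)" using hom_QI[OF fJ, of n] True by simp
      have "cmult (QI CARD('p) n I) (QI CARD('p) n J) = smul ((-1) ^ ((n - card I) * 0)) (cmult (QI CARD('p) n J) (QI CARD('p) n I) :: 'p mod_ring coh)"
        by (rule comm[OF hI hJ])
      moreover have "I \<inter> J = I" using IJ by auto
      moreover have "I \<union> J = {..<n}" using IJ True by auto
      ultimately show ?thesis using True Fs_sub[OF IJ] by simp
    next
      case False
      have "I \<union> J = J" using IJ by auto
      then show ?thesis using False zero_lemma[OF p2 IJ Jn False] by simp
    qed
  qed
next
  case (Suc r)
  show ?case
  proof (intro allI impI)
    fix I J :: "nat set"
    assume In: "I \<subseteq> {..<n}" and Jn: "J \<subseteq> {..<n}" and c: "card (I - J) = Suc r"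
    let ?X = "QI CARD('p) n :: nat set \<Rightarrow> 'p mod_ring coh"
    let ?Q = "milnorQ CARD('p) :: nat \<Rightarrow> 'p mod_ring coh \<Rightarrow> 'p mod_ring coh"
    have fI: "finite I" using In finite_subset by blast
    have fJ: "finite J" using Jn finite_subset by blast
    have "I - J \<noteq> {}"
    proof
      assume e: "I - J = {}"
      have "card (I - J) = 0" unfolding e by simp
      then show False using c by simp
    qed
    then obtain i where iI: "i \<in> I" and iJ: "i \<notin> J" by blast
    let ?I' = "I - {i}"
    have I'n: "?I' \<subseteq> {..<n}" using In by auto
    have iJn: "insert i J \<subseteq> {..<n}" using In Jn iI by auto
    have c1: "card (?I' - J) = r"
    proof -
      have "?I' - J = (I - J) - {i}" by auto
      then show ?thesis using c iI iJ fI by (simp add: card_Diff_singleton)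
    qed
    have c2: "card (?I' - insert i J) = r"
    proof -
      have "?I' - insert i J = (I - J) - {i}" by auto
      then show ?thesis using c iI iJ fI by (simp add: card_Diff_singleton)
    qed
    note IH1 = Suc.IH[rule_format, OF I'n Jn c1]
    note IH2 = Suc.IH[rule_format, OF I'n iJn c2]
    have hI': "hom n (n - card ?I') (?X ?I')" using fI by (intro hom_QI) simp
    have hJ: "hom n (n - card J) (?X J)" using fJ by (rule hom_QI)
    have XI: "?X I = smul (of_int ((-1) ^ card {l\<in>I. l < i})) (?Q i (?X ?I'))"
      by (rule QI_reorder[OF fI iI])
    have QJ: "?Q i (?X J) = smul (of_int ((-1) ^ card {l\<in>J. l < i})) (?X (insert i J))"
      by (rule Q_QI_notin[OF fJ iJ])
    have D: "?Q i (cmult (?X ?I') (?X J)) = cmult (?Q i (?X ?I')) (?X J)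
        + smul ((-1) ^ (n - card ?I')) (cmult (?X ?I') (?Q i (?X J)))"
      by (rule derivQ[OF hI' hJ])
    have key: "cmult (?X I) (?X J) = smul (of_int ((-1) ^ card {l\<in>I. l < i}))
        (?Q i (cmult (?X ?I') (?X J)) - smul ((-1) ^ (n - card ?I'))
            (smul (of_int ((-1) ^ card {l\<in>J. l < i})) (cmult (?X ?I') (?X (insert i J)))))"
      unfolding XI cmult_smul_left using D unfolding QJ cmult_smul_right
      by (simp add: eq_diff_eq)
    have U: "?I' \<union> insert i J = I \<union> J" using iI by auto
    show "(I \<union> J \<noteq> {..<n} \<longrightarrow> cmult (?X I) (?X J) = 0)
     \<and> (I \<union> J = {..<n} \<longrightarrow> cmult (?X I) (?X J) =
        smul (of_int (Fs n I J)) (cmult (?X {..<n}) (?X (I \<inter> J))))"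
    proof (cases "I \<union> J = {..<n}")
      case False
      have "?I' \<union> J \<noteq> {..<n}" using False In Jn by auto
      then have z1: "cmult (?X ?I') (?X J) = 0" using IH1 by blast
      have z2: "cmult (?X ?I') (?X (insert i J)) = 0" using IH2 U False by simp
      show ?thesis using False key z1 z2 by (simp add: milnorQ_mod_ring)
    next
      case True
      have "i \<notin> ?I' \<union> J" using iJ by auto
      moreover have "i \<in> {..<n}" using In iI by auto
      ultimately have "?I' \<union> J \<noteq> {..<n}" by blast
      then have z1: "cmult (?X ?I') (?X J) = 0" using IH1 by blast
      have K: "?I' \<inter> insert i J = I \<inter> J" using iJ by auto
      have z2: "cmult (?X ?I') (?X (insert i J)) = smul (of_int (Fs n ?I' (insert i J))) (cmult (?X {..<n}) (?X (I \<inter> J)))"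
        using IH2 U True K by simp
      have sg: "Fs n I J = (-1) ^ card {l\<in>I. l < i} * (- ((-1) ^ (n - card ?I'))) * (-1) ^ card {l\<in>J. l < i}
                   * Fs n ?I' (insert i J)"
        by (rule main_sign[OF fI fJ In iI iJ])
      show ?thesis using True unfolding key z1 z2 sg
        by (simp add: milnorQ_mod_ring smul_uminus smul_uminus_left ac_simps)
    qed
  qed
qed


theorem lemma3p1:
  fixes n :: nat and I J :: "nat set"
  assumes "n \<ge> 1" and "CARD('p::prime_card) > 2"
    and "I \<subseteq> {..<n}" and "J \<subseteq> {..<n}"
  shows "(I \<union> J \<noteq> {..<n} \<longrightarrow>
           cmult (QI CARD('p) n I) (QI CARD('p) n J) = (0 :: 'p mod_ring coh))
       \<and> (I \<union> J = {..<n} \<longrightarrow>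
           cmult (QI CARD('p) n I) (QI CARD('p) n J) =
             smul (of_int ((-1) ^ (n * card (I - I \<inter> J) + (card (I - I \<inter> J))\<^sup>2)
                     * sgn (I \<inter> J) (I - I \<inter> J) * sgn (I - I \<inter> J) J))
                  (cmult (e CARD('p) n) (QI CARD('p) n (I \<inter> J) :: 'p mod_ring coh)))"
  unfolding e_def Fs_def[symmetric]
  using main_ind[OF assms(2), of n "card (I - J)"] assms(3,4) by blast

end
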